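(* Let $G\colon\mathsf{Nom}\to\mathsf{Nom}$ be $GX=2\times X^{\mathbb{A}}\times[\mathbb{A}]X$. The terminal $G$-coalgebra is the nominal set $\mathcal{P}_{\mathsf{fs}}(\overline{\mathbb{A}}^*/{=_\alpha})$ of all bar languages with the structure $\tau(S)=(b,\,a\mapsto S_a,\,S_{\mathord{|}a})$, where $b=1$ if $[\varepsilon]_\alpha\in S$ and $b=0$ otherwise, $S_a=\{[w]_\alpha:[aw]_\alpha\in S\}$, and $S_{\mathord{|}a}=\langle a\rangle\{[w]_\alpha:[\mathord{|}a\,w]_\alpha\in S\}$ for any $a$ fresh for $S$.
   Context: Fix a countably infinite set $\mathbb{A}$ of names; $\mathsf{Nom}$ is the category of nominal sets and equivariant maps; $2=\{0,1\}$ with trivial action; $X^{\mathbb{A}}$ is the exponential (finitely supported functions). $[\mathbb{A}]X=(\mathbb{A}\times X)/\sim$ with $(a,x)\sim(b,y)$ iff $(a\,c)\cdot x=(b\,c)\cdot y$ for fresh $c$; classes $\langle a\rangle x$. $\mathcal{P}_{\mathsf{fs}}Y$ is the nominal set of finitely supported subsets of $Y$; $a$ fresh for $S$ means $a$ not in the least support of $S$. Bar strings are words over $\overline{\mathbb{A}}=\mathbb{A}\cup\{\mathord{|}a:a\in\mathbb{A}\}$ (pointwise action); $=_\alpha$ is the least equivalence relation with $x\,\mathord{|}a\,v=_\alpha x\,\mathord{|}b\,w$ whenever $\langle a\rangle v=\langle b\rangle w$ (i.e. $a=b,v=w$, or $b$ fresh for $v$ and $(a\,b)\cdot v=w$); $[w]_\alpha$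 denotes classes, with action $\pi\cdot[w]_\alpha=[\pi\cdot w]_\alpha$. *)

theory Defs
  imports Main "HOL-Library.Countable" "HOL-Library.Infinite_Typeclass" "HOL-Combinatorics.Perm"
begin

text \<open>Names: a type 'a of class countable and infinite (a countably infinite set of names).\<close>

definition is_action :: "('a perm \<Rightarrow> 'x \<Rightarrow> 'x) \<Rightarrow> 'x set \<Rightarrow> bool" where
  "is_action act X \<longleftrightarrow>
     (\<forall>p. \<forall>x\<in>X. act p x \<in> X) \<and> (\<forall>x\<in>X. act 1 x = x) \<and>
     (\<forall>p q. \<forall>x\<in>X. act (p * q) x = act p (act q x))"

definition supports :: "('a perm \<Rightarrow> 'x \<Rightarrow> 'x) \<Rightarrow> 'a set \<Rightarrow> 'x \<Rightarrow> bool" where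
  "supports act A x \<longleftrightarrow> (\<forall>p. (\<forall>a\<in>A. Perm.apply p a = a) \<longrightarrow> act p x = x)"

definition fin_supp :: "('a perm \<Rightarrow> 'x \<Rightarrow> 'x) \<Rightarrow> 'x \<Rightarrow> bool" where
  "fin_supp act x \<longleftrightarrow> (\<exists>A. finite A \<and> supports act A x)"

definition supp :: "('a perm \<Rightarrow> 'x \<Rightarrow> 'x) \<Rightarrow> 'x \<Rightarrow> 'a set" where
  "supp act x = \<Inter>{A. finite A \<and> supports act A x}"

definition fresh :: "('a perm \<Rightarrow> 'x \<Rightarrow> 'x) \<Rightarrow> 'a \<Rightarrow> 'x \<Rightarrow> bool" where
  "fresh act a x \<longleftrightarrow> a \<notin> supp act x"

definition nominal :: "('a perm \<Rightarrow> 'x \<Rightarrow> 'x) \<Rightarrow> 'x set \<Rightarrow> bool" where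
  "nominal act X \<longleftrightarrow> is_action act X \<and> (\<forall>x\<in>X. fin_supp act x)"

definition equivariant ::
  "('a perm \<Rightarrow> 'x \<Rightarrow> 'x) \<Rightarrow> 'x set \<Rightarrow> ('a perm \<Rightarrow> 'y \<Rightarrow> 'y) \<Rightarrow> 'y set \<Rightarrow> ('x \<Rightarrow> 'y) \<Rightarrow> bool" where
  "equivariant actX X actY Y h \<longleftrightarrow>
     (\<forall>x\<in>X. h x \<in> Y) \<and> (\<forall>p. \<forall>x\<in>X. h (actX p x) = actY p (h x))"

definition fun_act :: "('a perm \<Rightarrow> 'x \<Rightarrow> 'x) \<Rightarrow> 'a perm \<Rightarrow> ('a \<Rightarrow> 'x) \<Rightarrow> ('a \<Rightarrow> 'x)" where
  "fun_act act p f = (\<lambda>a. act p (f (Perm.apply (inverse p) a)))"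

definition exp_carrier :: "('a perm \<Rightarrow> 'x \<Rightarrow> 'x) \<Rightarrow> 'x set \<Rightarrow> ('a \<Rightarrow> 'x) set" where
  "exp_carrier act X = {f. (\<forall>a. f a \<in> X) \<and> fin_supp (fun_act act) f}"

definition abs_rel :: "('a perm \<Rightarrow> 'x \<Rightarrow> 'x) \<Rightarrow> 'a \<times> 'x \<Rightarrow> 'a \<times> 'x \<Rightarrow> bool" where
  "abs_rel act ax by' \<longleftrightarrow> (case ax of (a, x) \<Rightarrow> case by' of (b, y) \<Rightarrow>
     (\<exists>c. c \<noteq> a \<and> c \<noteq> b \<and> fresh act c x \<and> fresh act c y \<and>
          act (Perm.swap a c) x = act (Perm.swap b c) y))"

definition abs_cls :: "('a perm \<Rightarrow> 'x \<Rightarrow> 'x) \<Rightarrow> 'x set \<Rightarrow> 'a \<Rightarrow> 'x \<Rightarrow> ('a \<times> 'x) set" where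
  "abs_cls act X a x = {(b, y). b \<in> UNIV \<and> y \<in> X \<and> abs_rel act (a, x) (b, y)}"

definition abs_carrier :: "('a perm \<Rightarrow> 'x \<Rightarrow> 'x) \<Rightarrow> 'x set \<Rightarrow> ('a \<times> 'x) set set" where
  "abs_carrier act X = {abs_cls act X a x | a x. x \<in> X}"

definition abs_act :: "('a perm \<Rightarrow> 'x \<Rightarrow> 'x) \<Rightarrow> 'a perm \<Rightarrow> ('a \<times> 'x) set \<Rightarrow> ('a \<times> 'x) set" where
  "abs_act act p \<alpha> = (\<lambda>(a, x). (Perm.apply p a, act p x)) ` \<alpha>"

text \<open>[A]h (<a>x) = <a>(h x); the union over representatives is that single class
  whenever h is equivariant.\<close>
definition abs_map :: "('a perm \<Rightarrow> 'y \<Rightarrow> 'y) \<Rightarrow> 'y set \<Rightarrow> ('x \<Rightarrow> 'y) \<Rightarrow> ('a \<times> 'x) set \<Rightarrow> ('a \<times> 'y) set" where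
  "abs_map actY Y h \<alpha> = (\<Union>(a, x)\<in>\<alpha>. abs_cls actY Y a (h x))"

type_synonym ('a, 'x) G = "bool \<times> ('a \<Rightarrow> 'x) \<times> ('a \<times> 'x) set"

definition G_carrier :: "('a perm \<Rightarrow> 'x \<Rightarrow> 'x) \<Rightarrow> 'x set \<Rightarrow> ('a, 'x) G set" where
  "G_carrier act X = UNIV \<times> exp_carrier act X \<times> abs_carrier act X"

definition G_act :: "('a perm \<Rightarrow> 'x \<Rightarrow> 'x) \<Rightarrow> 'a perm \<Rightarrow> ('a, 'x) G \<Rightarrow> ('a, 'x) G" where
  "G_act act p t = (case t of (b, f, \<alpha>) \<Rightarrow> (b, fun_act act p f, abs_act act p \<alpha>))"

definition G_map :: "('a perm \<Rightarrow> 'y \<Rightarrow> 'y) \<Rightarrow> 'y set \<Rightarrow> ('x \<Rightarrow> 'y) \<Rightarrow> ('a, 'x) G \<Rightarrow> ('a, 'y) G" where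
  "G_map actY Y h t = (case t of (b, f, \<alpha>) \<Rightarrow> (b, h \<circ> f, abs_map actY Y h \<alpha>))"

definition G_coalg :: "('a perm \<Rightarrow> 'x \<Rightarrow> 'x) \<Rightarrow> 'x set \<Rightarrow> ('x \<Rightarrow> ('a, 'x) G) \<Rightarrow> bool" where
  "G_coalg act X c \<longleftrightarrow> nominal act X \<and> equivariant act X (G_act act) (G_carrier act X) c"

definition G_hom ::
  "('a perm \<Rightarrow> 'x \<Rightarrow> 'x) \<Rightarrow> 'x set \<Rightarrow> ('x \<Rightarrow> ('a, 'x) G) \<Rightarrow>
   ('a perm \<Rightarrow> 'y \<Rightarrow> 'y) \<Rightarrow> 'y set \<Rightarrow> ('y \<Rightarrow> ('a, 'y) G) \<Rightarrow> ('x \<Rightarrow> 'y) \<Rightarrow> bool" where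
  "G_hom actX X c actY Y d h \<longleftrightarrow> equivariant actX X actY Y h \<and>
     (\<forall>x\<in>X. d (h x) = G_map actY Y h (c x))"

datatype 'a barl = Nm 'a | Bar 'a

fun barl_act :: "'a perm \<Rightarrow> 'a barl \<Rightarrow> 'a barl" where
  "barl_act p (Nm a) = Nm (Perm.apply p a)"
| "barl_act p (Bar a) = Bar (Perm.apply p a)"

definition bs_act :: "'a perm \<Rightarrow> 'a barl list \<Rightarrow> 'a barl list" where
  "bs_act p w = map (barl_act p) w"

fun barl_name :: "'a barl \<Rightarrow> 'a" where
  "barl_name (Nm a) = a" | "barl_name (Bar a) = a"

text \<open>The (least) support of a bar string under the pointwise action: the names occurring in it.\<close>
definition bs_names :: "'a barl list \<Rightarrow> 'a set" where
  "bs_names w = barl_name ` set w"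

text \<open><a>v = <b>w in [A](bar strings): a = b and v = w, or b fresh for v and (a b).v = w.\<close>
definition bs_abs_eq :: "'a \<Rightarrow> 'a barl list \<Rightarrow> 'a \<Rightarrow> 'a barl list \<Rightarrow> bool" where
  "bs_abs_eq a v b w \<longleftrightarrow> (a = b \<and> v = w) \<or> (b \<notin> bs_names v \<and> bs_act (Perm.swap a b) v = w)"

definition alpha_step :: "'a barl list \<Rightarrow> 'a barl list \<Rightarrow> bool" where
  "alpha_step u u' \<longleftrightarrow> (\<exists>x a v b w. u = x @ Bar a # v \<and> u' = x @ Bar b # w \<and> bs_abs_eq a v b w)"

definition alpha_eq :: "'a barl list \<Rightarrow> 'a barl list \<Rightarrow> bool" where
  "alpha_eq = equivclp alpha_step"

definition alpha_cls :: "'a barl list \<Rightarrow> 'a barl list set" where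
  "alpha_cls w = {v. alpha_eq w v}"

definition alpha_classes :: "'a barl list set set" where
  "alpha_classes = range alpha_cls"

definition cls_act :: "'a perm \<Rightarrow> 'a barl list set \<Rightarrow> 'a barl list set" where
  "cls_act p c = (\<Union>w\<in>c. alpha_cls (bs_act p w))"

type_synonym 'a blang = "'a barl list set set"

definition lang_act :: "'a perm \<Rightarrow> 'a blang \<Rightarrow> 'a blang" where
  "lang_act p S = cls_act p ` S"

definition bar_langs :: "'a blang set" where
  "bar_langs = {S. S \<subseteq> alpha_classes \<and> fin_supp lang_act S}"

definition deriv_nm :: "'a blang \<Rightarrow> 'a \<Rightarrow> 'a blang" where
  "deriv_nm S a = {alpha_cls w | w. alpha_cls (Nm a # w) \<in> S}"

definition deriv_bar :: "'a blang \<Rightarrow> 'a \<Rightarrow> 'a blang" where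
  "deriv_bar S a = {alpha_cls w | w. alpha_cls (Bar a # w) \<in> S}"

text \<open>tau(S) = (b, a |-> S_a, S_{|a}) with S_{|a} = <a>{[w] : [|a w] in S} for a fresh for S
  (here a chosen fresh name; independence of the choice is part of the theorem).\<close>
definition tau :: "'a blang \<Rightarrow> ('a, 'a blang) G" where
  "tau S = (alpha_cls [] \<in> S, deriv_nm S,
            (let a = (SOME a. fresh lang_act a S) in abs_cls lang_act bar_langs a (deriv_bar S a)))"

end

theory Submission
  imports Defs
begin


section \<open>Permutation facts\<close>

lemma swap_apply: "Perm.apply (Perm.swap a b) c = (if c = a then b else if c = b then a else c)"
  by auto

lemma swap_comm3: "c \<noteq> a \<Longrightarrow> c' \<noteq> a \<Longrightarrow>
  Perm.swap c c' * Perm.swap a c = Perm.swap a c' * Perm.swap c c'"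
  by (rule perm_eqI) (auto simp: apply_times swap_apply)

lemma swap_conj: "p * Perm.swap a b = Perm.swap (Perm.apply p a) (Perm.apply p b) * p"
  by (rule perm_eqI) (auto simp: apply_times swap_apply apply_inj)

lemma swap_decomp: "a \<noteq> b \<Longrightarrow> d \<noteq> a \<Longrightarrow> d \<noteq> b \<Longrightarrow>
  Perm.swap a b = Perm.swap a d * Perm.swap b d * Perm.swap a d"
  by (rule perm_eqI) (auto simp: apply_times swap_apply)

lemma apply_inv_apply [simp]: "Perm.apply (inverse p) (Perm.apply p a) = a"
  by (simp add: apply_sequence)

lemma apply_apply_inv [simp]: "Perm.apply p (Perm.apply (inverse p) a) = a"
  by (simp add: apply_sequence)

lemma fresh_iff: "fresh act a x \<longleftrightarrow> (\<exists>A. finite A \<and> supports act A x \<and> a \<notin> A)"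
  unfolding fresh_def supp_def by auto

lemma ex_fresh_name: "finite (F::'a::infinite set) \<Longrightarrow> \<exists>a. a \<notin> F"
  using ex_new_if_finite[OF infinite_UNIV] by auto

section \<open>Generic nominal facts\<close>

lemma act_closed: "is_action act X \<Longrightarrow> x \<in> X \<Longrightarrow> act p x \<in> X"
  unfolding is_action_def by auto

lemma act_one: "is_action act X \<Longrightarrow> x \<in> X \<Longrightarrow> act 1 x = x"
  unfolding is_action_def by auto

lemma act_comp: "is_action act X \<Longrightarrow> x \<in> X \<Longrightarrow> act (p * q) x = act p (act q x)"
  unfolding is_action_def by blast

lemma act_inv_act: "is_action act X \<Longrightarrow> x \<in> X \<Longrightarrow> act (inverse p) (act p x) = x"
proof -
  assume a: "is_action act X" "x \<in> X"
  have "act (inverse p) (act p x) = act (inverse p * p) x" using act_comp[OF a, of "inverse p" p] by simp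
  also have "\<dots> = x" using act_one[OF a] by simp
  finally show ?thesis .
qed

lemma supportsD: "supports act A x \<Longrightarrow> (\<And>a. a \<in> A \<Longrightarrow> Perm.apply p a = a) \<Longrightarrow> act p x = x"
  unfolding supports_def by auto

lemma swap_fresh:
  fixes act :: "'a::infinite perm \<Rightarrow> 'x \<Rightarrow> 'x"
  assumes act: "is_action act X" and x: "x \<in> X" and fa: "fresh act a x" and fb: "fresh act b x"
  shows "act (Perm.swap a b) x = x"
proof (cases "a = b")
  case True
  then show ?thesis using act_one[OF act x] by simp
next
  case ab: False
  obtain A where A: "finite A" "supports act A x" "a \<notin> A" using fa by (auto simp: fresh_iff)
  obtain B where B: "finite B" "supports act B x" "b \<notin> B" using fb by (auto simp: fresh_iff)
  obtain d where d: "d \<notin> A \<union> B \<union> {a, b}" using ex_fresh_name[of "A \<union> B \<union> {a,b}"] A B by auto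
  have 1: "act (Perm.swap a d) x = x"
  proof (rule supportsD[OF A(2)])
    fix z assume "z \<in> A" then have "z \<noteq> a" "z \<noteq> d" using A(3) d by auto
    then show "Perm.apply (Perm.swap a d) z = z" by simp
  qed
  have 2: "act (Perm.swap b d) x = x"
  proof (rule supportsD[OF B(2)])
    fix z assume "z \<in> B" then have "z \<noteq> b" "z \<noteq> d" using B(3) d by auto
    then show "Perm.apply (Perm.swap b d) z = z" by simp
  qed
  have "act (Perm.swap a b) x = act (Perm.swap a d * Perm.swap b d * Perm.swap a d) x"
    using swap_decomp[of a b d] ab d by auto
  also have "\<dots> = x"
    using act_comp[OF act] act_closed[OF act] x 1 2 by (simp add: mult.assoc)
  finally show ?thesis .
qed

lemma supports_act:
  assumes comp: "\<And>p q. act (p * q) x = act p (act q x)" and A: "supports act A x"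
  shows "supports act (Perm.apply p ` A) (act p x)"
  unfolding supports_def
proof (intro allI impI)
  fix q assume q: "\<forall>a\<in>Perm.apply p ` A. Perm.apply q a = a"
  define r where "r = inverse p * q * p"
  have qp: "q * p = p * r" unfolding r_def by (simp add: mult.assoc[symmetric])
  have "act r x = x"
    using q by (intro supportsD[OF A]) (auto simp: r_def apply_times)
  then show "act q (act p x) = act p x"
    by (metis comp qp)
qed

lemma fresh_act:
  assumes act: "is_action act X" and x: "x \<in> X" and f: "fresh act a x"
  shows "fresh act (Perm.apply p a) (act p x)"
proof -
  obtain A where A: "finite A" "supports act A x" "a \<notin> A" using f by (auto simp: fresh_iff)
  have "supports act (Perm.apply p ` A) (act p x)"
    by (rule supports_act[OF _ A(2)]) (simp add: act_comp[OF act x])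
  moreover have "Perm.apply p a \<notin> Perm.apply p ` A" using A(3) by (auto simp: apply_inj)
  ultimately show ?thesis using A(1) by (auto simp: fresh_iff)
qed

lemma supports_equiv:
  assumes "equivariant actX X actY Y h" "x \<in> X" "supports actX A x"
  shows "supports actY A (h x)"
  using assms unfolding supports_def equivariant_def by metis

lemma fresh_equiv:
  assumes "equivariant actX X actY Y h" "x \<in> X" "fresh actX a x"
  shows "fresh actY a (h x)"
  using assms supports_equiv[OF assms(1,2)] by (meson fresh_iff)

lemma fin_supp_cofinite:
  assumes "fin_supp act x" shows "\<exists>A. finite A \<and> (\<forall>c. c \<notin> A \<longrightarrow> fresh act c x)"
  using assms unfolding fin_supp_def fresh_iff by blast

lemma nominal_fin_supp: "nominal act X \<Longrightarrow> x \<in> X \<Longrightarrow> fin_supp act x"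
  unfolding nominal_def by auto

lemma nominal_action: "nominal act X \<Longrightarrow> is_action act X"
  unfolding nominal_def by auto

section \<open>Abstraction\<close>

lemma abs_rel_simp: "abs_rel act (a, x) (b, y) \<longleftrightarrow>
  (\<exists>c. c \<noteq> a \<and> c \<noteq> b \<and> fresh act c x \<and> fresh act c y \<and>
          act (Perm.swap a c) x = act (Perm.swap b c) y)"
  unfolding abs_rel_def by simp

lemma abs_rel_any:
  fixes act :: "'a::infinite perm \<Rightarrow> 'x \<Rightarrow> 'x"
  assumes nom: "nominal act X" and x: "x \<in> X" and y: "y \<in> X"
    and r: "abs_rel act (a, x) (b, y)" and c: "c \<noteq> a" "c \<noteq> b" "fresh act c x" "fresh act c y"
  shows "act (Perm.swap a c) x = act (Perm.swap b c) y"
proof -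
  have act: "is_action act X" using nom by (rule nominal_action)
  obtain c0 where c0: "c0 \<noteq> a" "c0 \<noteq> b" "fresh act c0 x" "fresh act c0 y"
    "act (Perm.swap a c0) x = act (Perm.swap b c0) y"
    using r unfolding abs_rel_simp by auto
  have key: "act (Perm.swap c0 c) (act (Perm.swap e c0) z) = act (Perm.swap e c) z"
    if "z \<in> X" "c0 \<noteq> e" "c \<noteq> e" "fresh act c0 z" "fresh act c z" for e z
  proof -
    have "act (Perm.swap c0 c) (act (Perm.swap e c0) z) = act (Perm.swap c0 c * Perm.swap e c0) z"
      using act_comp[OF act that(1)] by simp
    also have "\<dots> = act (Perm.swap e c * Perm.swap c0 c) z"
      using swap_comm3[of c0 e c] that by simp
    also have "\<dots> = act (Perm.swap e c) (act (Perm.swap c0 c) z)"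
      using act_comp[OF act that(1)] by simp
    also have "\<dots> = act (Perm.swap e c) z"
      using swap_fresh[OF act that(1,4,5)] by simp
    finally show ?thesis .
  qed
  show ?thesis
    using key[OF x c0(1) c(1) c0(3) c(3)] key[OF y c0(2) c(2) c0(4) c(4)] c0(5) by simp
qed

lemma fresh_avoid:
  fixes F :: "'a::infinite set"
  assumes "finite F" "fin_supp act1 x1" "fin_supp act2 x2"
  shows "\<exists>c. c \<notin> F \<and> fresh act1 c x1 \<and> fresh act2 c x2"
proof -
  obtain A1 where A1: "finite A1" "\<forall>c. c \<notin> A1 \<longrightarrow> fresh act1 c x1" using fin_supp_cofinite[OF assms(2)] by blast
  obtain A2 where A2: "finite A2" "\<forall>c. c \<notin> A2 \<longrightarrow> fresh act2 c x2" using fin_supp_cofinite[OF assms(3)] by blast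
  obtain c where "c \<notin> F \<union> A1 \<union> A2" using ex_fresh_name[of "F \<union> A1 \<union> A2"] assms(1) A1 A2 by auto
  then show ?thesis using A1 A2 by auto
qed

lemma fresh_avoid3:
  fixes F :: "'a::infinite set"
  assumes "finite F" "fin_supp act1 x1" "fin_supp act2 x2" "fin_supp act3 x3"
  shows "\<exists>c. c \<notin> F \<and> fresh act1 c x1 \<and> fresh act2 c x2 \<and> fresh act3 c x3"
proof -
  obtain A1 where A1: "finite A1" "\<forall>c. c \<notin> A1 \<longrightarrow> fresh act1 c x1" using fin_supp_cofinite[OF assms(2)] by blast
  obtain A2 where A2: "finite A2" "\<forall>c. c \<notin> A2 \<longrightarrow> fresh act2 c x2" using fin_supp_cofinite[OF assms(3)] by blast
  obtain A3 where A3: "finite A3" "\<forall>c. c \<notin> A3 \<longrightarrow> fresh act3 c x3" using fin_supp_cofinite[OF assms(4)] by blast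
  obtain c where "c \<notin> F \<union> A1 \<union> A2 \<union> A3" using ex_fresh_name[of "F \<union> A1 \<union> A2 \<union> A3"] assms(1) A1 A2 A3 by auto
  then show ?thesis using A1 A2 A3 by auto
qed

lemma abs_rel_refl:
  fixes act :: "'a::infinite perm \<Rightarrow> 'x \<Rightarrow> 'x"
  assumes nom: "nominal act X" and x: "x \<in> X"
  shows "abs_rel act (a, x) (a, x)"
proof -
  obtain c where "c \<notin> {a}" "fresh act c x" "fresh act c x"
    using fresh_avoid[of "{a}" act x act x] nominal_fin_supp[OF nom x] by auto
  then show ?thesis unfolding abs_rel_simp by auto
qed

lemma abs_rel_sym: "abs_rel act (a, x) (b, y) \<Longrightarrow> abs_rel act (b, y) (a, x)"
  unfolding abs_rel_simp by metis

lemma abs_rel_trans: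
  fixes act :: "'a::infinite perm \<Rightarrow> 'x \<Rightarrow> 'x"
  assumes nom: "nominal act X" and x: "x \<in> X" and y: "y \<in> X" and z: "z \<in> X"
    and r1: "abs_rel act (a, x) (b, y)" and r2: "abs_rel act (b, y) (e, z)"
  shows "abs_rel act (a, x) (e, z)"
proof -
  obtain c where c: "c \<notin> {a, b, e}" "fresh act c x" "fresh act c y" "fresh act c z"
    using fresh_avoid3[of "{a,b,e}" act x act y act z] nominal_fin_supp[OF nom] x y z by auto
  have "act (Perm.swap a c) x = act (Perm.swap b c) y"
    using abs_rel_any[OF nom x y r1] c by auto
  also have "\<dots> = act (Perm.swap e c) z"
    using abs_rel_any[OF nom y z r2] c by auto
  finally show ?thesis unfolding abs_rel_simp using c by auto
qed

lemma abs_cls_memD: "(b, y) \<in> abs_cls act X a x \<Longrightarrow> y \<in> X \<and> abs_rel act (a, x) (b, y)"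
  unfolding abs_cls_def by auto

lemma abs_cls_mem: "nominal (act :: 'a::infinite perm \<Rightarrow> 'x \<Rightarrow> 'x) X \<Longrightarrow> x \<in> X \<Longrightarrow> (a, x) \<in> abs_cls act X a x"
  unfolding abs_cls_def using abs_rel_refl by auto

lemma abs_cls_eq:
  fixes act :: "'a::infinite perm \<Rightarrow> 'x \<Rightarrow> 'x"
  assumes nom: "nominal act X" and x: "x \<in> X" and y: "y \<in> X" and r: "abs_rel act (a, x) (b, y)"
  shows "abs_cls act X a x = abs_cls act X b y"
proof -
  have eq: "abs_rel act (a, x) (e, z) = abs_rel act (b, y) (e, z)" if z: "z \<in> X" for e z
    using abs_rel_trans[OF nom x y z r] abs_rel_trans[OF nom y x z abs_rel_sym[OF r]] by blast
  show ?thesis unfolding abs_cls_def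
  proof (intro set_eqI iffI)
    fix w assume "w \<in> {(e, z). e \<in> UNIV \<and> z \<in> X \<and> abs_rel act (a, x) (e, z)}"
    then show "w \<in> {(e, z). e \<in> UNIV \<and> z \<in> X \<and> abs_rel act (b, y) (e, z)}" using eq by auto
  next
    fix w assume "w \<in> {(e, z). e \<in> UNIV \<and> z \<in> X \<and> abs_rel act (b, y) (e, z)}"
    then show "w \<in> {(e, z). e \<in> UNIV \<and> z \<in> X \<and> abs_rel act (a, x) (e, z)}" using eq by auto
  qed
qed

lemma abs_cls_swap_mem:
  fixes act :: "'a::infinite perm \<Rightarrow> 'x \<Rightarrow> 'x"
  assumes nom: "nominal act X" and x: "x \<in> X" and d: "d \<noteq> a" "fresh act d x"
  shows "(d, act (Perm.swap a d) x) \<in> abs_cls act X a x"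
proof -
  have act: "is_action act X" using nom by (rule nominal_action)
  have y: "act (Perm.swap a d) x \<in> X" using act_closed[OF act x] .
  obtain c where c: "c \<notin> {a, d}" "fresh act c x" "fresh act c x"
    using fresh_avoid[of "{a,d}" act x act x] nominal_fin_supp[OF nom x] by auto
  have fc: "fresh act c (act (Perm.swap a d) x)"
    using fresh_act[OF act x c(2), of "Perm.swap a d"] c by (auto simp: swap_apply)
  have "act (Perm.swap d c) (act (Perm.swap a d) x) = act (Perm.swap d c * Perm.swap a d) x"
    using act_comp[OF act x] by simp
  also have "\<dots> = act (Perm.swap a c * Perm.swap d c) x"
    using swap_comm3[of d a c] d c by auto
  also have "\<dots> = act (Perm.swap a c) x"
    using act_comp[OF act x] swap_fresh[OF act x d(2) c(2)] by simp
  finally have "abs_rel act (a, x) (d, act (Perm.swap a d) x)"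
    unfolding abs_rel_simp using c fc by (intro exI[of _ c]) auto
  then show ?thesis unfolding abs_cls_def using y by auto
qed

lemma abs_rel_eqvt:
  assumes act: "is_action act X" and x: "x \<in> X" and y: "y \<in> X" and r: "abs_rel act (a, x) (b, y)"
  shows "abs_rel act (Perm.apply p a, act p x) (Perm.apply p b, act p y)"
proof -
  obtain c where c: "c \<noteq> a" "c \<noteq> b" "fresh act c x" "fresh act c y"
    "act (Perm.swap a c) x = act (Perm.swap b c) y"
    using r unfolding abs_rel_simp by auto
  have e: "act (Perm.swap (Perm.apply p e) (Perm.apply p c)) (act p z) = act p (act (Perm.swap e c) z)"
    if "z \<in> X" for e z
    using act_comp[OF act that] swap_conj[of p e c] by metis
  show ?thesis unfolding abs_rel_simp
  proof (intro exI conjI)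
    show "Perm.apply p c \<noteq> Perm.apply p a" "Perm.apply p c \<noteq> Perm.apply p b"
      using c by (simp_all add: apply_inj)
    show "fresh act (Perm.apply p c) (act p x)" by (rule fresh_act[OF act x c(3)])
    show "fresh act (Perm.apply p c) (act p y)" by (rule fresh_act[OF act y c(4)])
    show "act (Perm.swap (Perm.apply p a) (Perm.apply p c)) (act p x) =
      act (Perm.swap (Perm.apply p b) (Perm.apply p c)) (act p y)"
      using e[OF x, of a] e[OF y, of b] c(5) by simp
  qed
qed

lemma abs_act_cls:
  assumes nom: "nominal act X" and x: "x \<in> X"
  shows "abs_act act p (abs_cls act X a x) = abs_cls act X (Perm.apply p a) (act p x)"
proof -
  have act: "is_action act X" using nom by (rule nominal_action)
  show ?thesis
  proof (intro set_eqI iffI)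
    fix z assume "z \<in> abs_act act p (abs_cls act X a x)"
    then obtain b y where z: "z = (Perm.apply p b, act p y)" and hby: "(b, y) \<in> abs_cls act X a x"
      unfolding abs_act_def by auto
    then show "z \<in> abs_cls act X (Perm.apply p a) (act p x)"
      using abs_cls_memD[OF hby] abs_rel_eqvt[OF act x] act_closed[OF act]
      unfolding abs_cls_def by auto
  next
    fix z assume z: "z \<in> abs_cls act X (Perm.apply p a) (act p x)"
    obtain b' y' where zz: "z = (b', y')" by force
    have y': "y' \<in> X" and r: "abs_rel act (Perm.apply p a, act p x) (b', y')"
      using abs_cls_memD[of b' y'] z zz by auto
    have "abs_rel act (Perm.apply (inverse p) (Perm.apply p a), act (inverse p) (act p x))
        (Perm.apply (inverse p) b', act (inverse p) y')"
      by (rule abs_rel_eqvt[OF act act_closed[OF act x] y' r])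
    then have r2: "abs_rel act (a, x) (Perm.apply (inverse p) b', act (inverse p) y')"
      using act_inv_act[OF act x] by simp
    have "(Perm.apply (inverse p) b', act (inverse p) y') \<in> abs_cls act X a x"
      unfolding abs_cls_def using r2 act_closed[OF act y'] by auto
    moreover have "act p (act (inverse p) y') = y'"
      using act_comp[OF act y', of p "inverse p", symmetric] act_one[OF act y'] by simp
    ultimately show "z \<in> abs_act act p (abs_cls act X a x)"
      unfolding abs_act_def zz by (auto intro!: image_eqI[of _ _ "(Perm.apply (inverse p) b', act (inverse p) y')"])
  qed
qed

lemma abs_map_cls:
  fixes actX :: "'a::infinite perm \<Rightarrow> 'x \<Rightarrow> 'x"
  assumes nomX: "nominal actX X" and nomY: "nominal actY Y" and h: "equivariant actX X actY Y h"
    and x: "x \<in> X"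
  shows "abs_map actY Y h (abs_cls actX X a x) = abs_cls actY Y a (h x)"
proof -
  have hY: "\<And>z. z \<in> X \<Longrightarrow> h z \<in> Y" using h unfolding equivariant_def by auto
  have eqcls: "abs_cls actY Y b (h y) = abs_cls actY Y a (h x)" if "(b, y) \<in> abs_cls actX X a x" for b y
  proof -
    have y: "y \<in> X" and r: "abs_rel actX (a, x) (b, y)" using abs_cls_memD[OF that] by auto
    obtain c where c: "c \<noteq> a" "c \<noteq> b" "fresh actX c x" "fresh actX c y"
      "actX (Perm.swap a c) x = actX (Perm.swap b c) y"
      using r unfolding abs_rel_simp by auto
    have hx: "actY (Perm.swap a c) (h x) = h (actX (Perm.swap a c) x)"
      and hy: "actY (Perm.swap b c) (h y) = h (actX (Perm.swap b c) y)"
      using h x y unfolding equivariant_def by simp_all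
    have "abs_rel actY (a, h x) (b, h y)"
      unfolding abs_rel_simp
    proof (intro exI conjI)
      show "c \<noteq> a" "c \<noteq> b" using c by auto
      show "fresh actY c (h x)" by (rule fresh_equiv[OF h x c(3)])
      show "fresh actY c (h y)" by (rule fresh_equiv[OF h y c(4)])
      show "actY (Perm.swap a c) (h x) = actY (Perm.swap b c) (h y)" using hx hy c(5) by simp
    qed
    then show ?thesis using abs_cls_eq[OF nomY hY[OF x] hY[OF y]] by simp
  qed
  have memax: "(a, x) \<in> abs_cls actX X a x" using abs_cls_mem[OF nomX x] .
  have "(\<lambda>(b, y). abs_cls actY Y b (h y)) ` abs_cls actX X a x = {abs_cls actY Y a (h x)}"
  proof (intro set_eqI iffI)
    fix s assume "s \<in> (\<lambda>(b, y). abs_cls actY Y b (h y)) ` abs_cls actX X a x"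
    then obtain b y where "(b, y) \<in> abs_cls actX X a x" "s = abs_cls actY Y b (h y)" by auto
    then show "s \<in> {abs_cls actY Y a (h x)}" using eqcls by simp
  next
    fix s assume "s \<in> {abs_cls actY Y a (h x)}"
    then have "s = (\<lambda>(b, y). abs_cls actY Y b (h y)) (a, x)" by simp
    then show "s \<in> (\<lambda>(b, y). abs_cls actY Y b (h y)) ` abs_cls actX X a x"
      using memax by blast
  qed
  then show ?thesis unfolding abs_map_def by simp
qed



section \<open>Bar strings\<close>

lemma barl_act_comp: "barl_act (p * q) l = barl_act p (barl_act q l)"
  by (cases l) (simp_all add: apply_sequence)

lemma barl_act_one [simp]: "barl_act 1 l = l"
  by (cases l) simp_all

lemma bs_act_Nil [simp]: "bs_act p [] = []" unfolding bs_act_def by simp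
lemma bs_act_Cons [simp]: "bs_act p (l # w) = barl_act p l # bs_act p w" unfolding bs_act_def by simp
lemma bs_act_append [simp]: "bs_act p (u @ w) = bs_act p u @ bs_act p w" unfolding bs_act_def by simp
lemma bs_act_length [simp]: "length (bs_act p w) = length w" unfolding bs_act_def by simp

lemma bs_act_comp: "bs_act (p * q) w = bs_act p (bs_act q w)"
  by (induct w) (simp_all add: barl_act_comp)

lemma bs_act_one [simp]: "bs_act 1 w = w"
  by (induct w) simp_all

lemma bs_act_inv1 [simp]: "bs_act (inverse p) (bs_act p w) = w"
  by (metis bs_act_comp bs_act_one perm.left_inverse)

lemma bs_act_inv2 [simp]: "bs_act p (bs_act (inverse p) w) = w"
  by (metis bs_act_comp bs_act_one perm.right_inverse)

lemma bs_names_Nil [simp]: "bs_names [] = {}" unfolding bs_names_def by simp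
lemma bs_names_Cons [simp]: "bs_names (l # w) = insert (barl_name l) (bs_names w)"
  unfolding bs_names_def by simp
lemma bs_names_finite [simp]: "finite (bs_names w)" unfolding bs_names_def by simp

lemma barl_name_act [simp]: "barl_name (barl_act p l) = Perm.apply p (barl_name l)"
  by (cases l) simp_all

lemma bs_names_act: "bs_names (bs_act p w) = Perm.apply p ` bs_names w"
  by (induct w) simp_all

lemma barl_act_fix: "Perm.apply p (barl_name l) = barl_name l \<Longrightarrow> barl_act p l = l"
  by (cases l) simp_all

lemma bs_act_fix: "(\<And>a. a \<in> bs_names w \<Longrightarrow> Perm.apply p a = a) \<Longrightarrow> bs_act p w = w"
  by (induct w) (simp_all add: barl_act_fix)

lemma bs_act_swap_fresh: "a \<notin> bs_names w \<Longrightarrow> b \<notin> bs_names w \<Longrightarrow> bs_act (Perm.swap a b) w = w"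
  by (rule bs_act_fix) (metis apply_swap_same)

section \<open>Alpha equivalence\<close>

lemma bs_abs_eq_eqvt:
  assumes "bs_abs_eq a v b w"
  shows "bs_abs_eq (Perm.apply p a) (bs_act p v) (Perm.apply p b) (bs_act p w)"
proof (cases "a = b \<and> v = w")
  case True then show ?thesis unfolding bs_abs_eq_def by simp
next
  case False
  then have b: "b \<notin> bs_names v" and w: "bs_act (Perm.swap a b) v = w"
    using assms unfolding bs_abs_eq_def by auto
  have "Perm.apply p b \<notin> bs_names (bs_act p v)" using b by (auto simp: bs_names_act apply_inj)
  moreover have "bs_act (Perm.swap (Perm.apply p a) (Perm.apply p b)) (bs_act p v) = bs_act p w"
    using w by (metis bs_act_comp swap_conj)
  ultimately show ?thesis unfolding bs_abs_eq_def by simp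
qed

lemma alpha_step_eqvt: "alpha_step u u' \<Longrightarrow> alpha_step (bs_act p u) (bs_act p u')"
  unfolding alpha_step_def
proof (elim exE conjE)
  fix x a v b w
  assume "u = x @ Bar a # v" "u' = x @ Bar b # w" "bs_abs_eq a v b w"
  then show "\<exists>x a v b w. bs_act p u = x @ Bar a # v \<and> bs_act p u' = x @ Bar b # w \<and> bs_abs_eq a v b w"
    using bs_abs_eq_eqvt by (intro exI[of _ "bs_act p x"] exI[of _ "Perm.apply p a"] exI[of _ "bs_act p v"]
      exI[of _ "Perm.apply p b"] exI[of _ "bs_act p w"]) simp
qed

lemma alpha_refl [simp]: "alpha_eq u u" unfolding alpha_eq_def by simp
lemma alpha_sym: "alpha_eq u v \<Longrightarrow> alpha_eq v u" unfolding alpha_eq_def by (rule equivclp_sym)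
lemma alpha_trans: "alpha_eq u v \<Longrightarrow> alpha_eq v w \<Longrightarrow> alpha_eq u w"
  unfolding alpha_eq_def by (rule equivclp_trans)
lemma alpha_stepI: "alpha_step u v \<Longrightarrow> alpha_eq u v" unfolding alpha_eq_def by blast

lemma alpha_eq_eqvt: "alpha_eq u v \<Longrightarrow> alpha_eq (bs_act p u) (bs_act p v)"
  unfolding alpha_eq_def
proof (induction rule: equivclp_induct)
  case base then show ?case by simp
next
  case (step y z)
  then show ?case using alpha_step_eqvt by (metis equivclp_into_equivclp)
qed

lemma alpha_step_cons: "alpha_step u v \<Longrightarrow> alpha_step (l # u) (l # v)"
  unfolding alpha_step_def by (metis append_Cons)

lemma alpha_eq_cons: "alpha_eq u v \<Longrightarrow> alpha_eq (l # u) (l # v)"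
  unfolding alpha_eq_def
proof (induction rule: equivclp_induct)
  case base then show ?case by simp
next
  case (step y z)
  then show ?case using alpha_step_cons by (metis equivclp_into_equivclp)
qed

lemma alpha_rename: "d \<notin> bs_names v \<Longrightarrow> alpha_eq (Bar a # v) (Bar d # bs_act (Perm.swap a d) v)"
  by (rule alpha_stepI) (unfold alpha_step_def bs_abs_eq_def, metis append.left_neutral)

definition absq :: "'a \<Rightarrow> 'a barl list \<Rightarrow> 'a \<Rightarrow> 'a barl list \<Rightarrow> bool" where
  "absq b v c w \<longleftrightarrow> (\<forall>d. d \<notin> bs_names v \<union> bs_names w \<union> {b, c} \<longrightarrow>
     alpha_eq (bs_act (Perm.swap b d) v) (bs_act (Perm.swap c d) w))"

lemma swap_move:
  assumes "d0 \<noteq> b" "d \<noteq> b" "d0 \<notin> bs_names v" "d \<notin> bs_names v"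
  shows "bs_act (Perm.swap d0 d) (bs_act (Perm.swap b d0) v) = bs_act (Perm.swap b d) v"
proof -
  have "bs_act (Perm.swap d0 d) (bs_act (Perm.swap b d0) v) = bs_act (Perm.swap d0 d * Perm.swap b d0) v"
    by (simp add: bs_act_comp)
  also have "\<dots> = bs_act (Perm.swap b d * Perm.swap d0 d) v"
    using swap_comm3[of d0 b d] assms by simp
  also have "\<dots> = bs_act (Perm.swap b d) v"
    using assms by (simp add: bs_act_comp bs_act_swap_fresh)
  finally show ?thesis .
qed

lemma absq_intro:
  assumes d0: "d0 \<notin> bs_names v \<union> bs_names w \<union> {b, c}"
    and e: "alpha_eq (bs_act (Perm.swap b d0) v) (bs_act (Perm.swap c d0) w)"
  shows "absq b v c w"
  unfolding absq_def
proof (intro allI impI)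
  fix d assume d: "d \<notin> bs_names v \<union> bs_names w \<union> {b, c}"
  show "alpha_eq (bs_act (Perm.swap b d) v) (bs_act (Perm.swap c d) w)"
  proof (cases "d = d0")
    case True then show ?thesis using e by simp
  next
    case False
    have "alpha_eq (bs_act (Perm.swap d0 d) (bs_act (Perm.swap b d0) v))
                   (bs_act (Perm.swap d0 d) (bs_act (Perm.swap c d0) w))"
      by (rule alpha_eq_eqvt[OF e])
    moreover have "bs_act (Perm.swap d0 d) (bs_act (Perm.swap b d0) v) = bs_act (Perm.swap b d) v"
      using d0 d by (intro swap_move) auto
    moreover have "bs_act (Perm.swap d0 d) (bs_act (Perm.swap c d0) w) = bs_act (Perm.swap c d) w"
      using d0 d by (intro swap_move) auto
    ultimately show ?thesis by simp
  qed
qed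

lemma fresh_name_lists:
  fixes b :: "'a::infinite"
  shows "\<exists>d. d \<notin> bs_names v \<union> bs_names w \<union> bs_names u \<union> {b, c, e}"
  by (rule ex_fresh_name) simp

lemma absq_refl: "absq b v b v"
  unfolding absq_def by simp

lemma absq_sym: "absq b v c w \<Longrightarrow> absq c w b v"
  unfolding absq_def by (auto intro: alpha_sym)

lemma absq_trans:
  fixes b :: "'a::infinite"
  assumes 1: "absq b v c w" and 2: "absq c w e u"
  shows "absq b v e u"
proof -
  obtain d where d: "d \<notin> bs_names v \<union> bs_names w \<union> bs_names u \<union> {b, c, e}"
    using fresh_name_lists by blast
  have "alpha_eq (bs_act (Perm.swap b d) v) (bs_act (Perm.swap c d) w)"
    using 1 d unfolding absq_def by auto
  moreover have "alpha_eq (bs_act (Perm.swap c d) w) (bs_act (Perm.swap e d) u)"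
    using 2 d unfolding absq_def by auto
  ultimately show ?thesis using d by (intro absq_intro[of d]) (auto intro: alpha_trans)
qed

definition Rb :: "'a barl list \<Rightarrow> 'a barl list \<Rightarrow> bool" where
  "Rb u u' \<longleftrightarrow> (u = [] \<and> u' = []) \<or> (\<exists>a v w. u = Nm a # v \<and> u' = Nm a # w \<and> alpha_eq v w)
     \<or> (\<exists>b v c w. u = Bar b # v \<and> u' = Bar c # w \<and> absq b v c w)"

lemma Rb_refl: "Rb u u"
  unfolding Rb_def
proof (cases u)
  case Nil then show "(u = [] \<and> u = []) \<or> (\<exists>a v w. u = Nm a # v \<and> u = Nm a # w \<and> alpha_eq v w)
     \<or> (\<exists>b v c w. u = Bar b # v \<and> u = Bar c # w \<and> absq b v c w)" by simp
next
  case (Cons l v) then show "(u = [] \<and> u = []) \<or> (\<exists>a v w. u = Nm a # v \<and> u = Nm a # w \<and> alpha_eq v w)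
     \<or> (\<exists>b v c w. u = Bar b # v \<and> u = Bar c # w \<and> absq b v c w)"
    by (cases l) (auto intro: absq_refl)
qed

lemma Rb_sym: "Rb u u' \<Longrightarrow> Rb u' u"
  unfolding Rb_def by (auto intro: alpha_sym absq_sym)

lemma Rb_trans:
  fixes u :: "'a::infinite barl list"
  shows "Rb u u' \<Longrightarrow> Rb u' u'' \<Longrightarrow> Rb u u''"
  unfolding Rb_def by (auto intro: alpha_trans absq_trans)

lemma step_Rb:
  assumes "alpha_step u u'" shows "Rb u u'"
proof -
  obtain x a v b w where u: "u = x @ Bar a # v" and u': "u' = x @ Bar b # w" and e: "bs_abs_eq a v b w"
    using assms unfolding alpha_step_def by blast
  show ?thesis
  proof (cases x)
    case Nil
    have "absq a v b w"
    proof (cases "a = b \<and> v = w")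
      case True then show ?thesis using absq_refl by simp
    next
      case False
      then have bv: "b \<notin> bs_names v" and w: "bs_act (Perm.swap a b) v = w"
        using e unfolding bs_abs_eq_def by auto
      show ?thesis unfolding absq_def
      proof (intro allI impI)
        fix d assume d: "d \<notin> bs_names v \<union> bs_names w \<union> {a, b}"
        have "bs_act (Perm.swap b d) w = bs_act (Perm.swap a d) v"
        proof (cases "a = b")
          case True then show ?thesis using w by simp
        next
          case ab: False
          have "bs_act (Perm.swap b d) w = bs_act (Perm.swap b d * Perm.swap a b) v"
            using w by (simp add: bs_act_comp)
          also have "\<dots> = bs_act (Perm.swap a d * Perm.swap b d) v"
            using swap_comm3[of b a d] ab d by auto
          also have "\<dots> = bs_act (Perm.swap a d) v"
            using bv d by (simp add: bs_act_comp bs_act_swap_fresh)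
          finally show ?thesis .
        qed
        then show "alpha_eq (bs_act (Perm.swap a d) v) (bs_act (Perm.swap b d) w)" by simp
      qed
    qed
    then show ?thesis unfolding Rb_def u u' Nil by simp
  next
    case (Cons l x')
    have st: "alpha_step (x' @ Bar a # v) (x' @ Bar b # w)"
      unfolding alpha_step_def using e by blast
    show ?thesis
    proof (cases l)
      case (Nm c)
      then show ?thesis unfolding Rb_def u u' Cons using alpha_stepI[OF st] by simp
    next
      case (Bar c)
      have "absq c (x' @ Bar a # v) c (x' @ Bar b # w)"
        unfolding absq_def using alpha_stepI[OF alpha_step_eqvt[OF st]] by blast
      then show ?thesis unfolding Rb_def u u' Cons Bar by simp
    qed
  qed
qed

lemma alpha_Rb:
  fixes u :: "'a::infinite barl list"
  assumes "alpha_eq u u'" shows "Rb u u'"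
  using assms unfolding alpha_eq_def
proof (induction rule: equivclp_induct)
  case base then show ?case by (rule Rb_refl)
next
  case (step y z)
  then show ?case using step_Rb Rb_sym Rb_trans by metis
qed

lemma alpha_Nil:
  fixes u :: "'a::infinite barl list"
  shows "alpha_eq [] u \<Longrightarrow> u = []"
  using alpha_Rb unfolding Rb_def by blast

lemma alpha_Nm:
  fixes u :: "'a::infinite barl list"
  shows "alpha_eq (Nm a # v) u \<Longrightarrow> \<exists>w. u = Nm a # w \<and> alpha_eq v w"
  using alpha_Rb unfolding Rb_def by blast

lemma alpha_Bar:
  fixes u :: "'a::infinite barl list"
  shows "alpha_eq (Bar b # v) u \<Longrightarrow> \<exists>c w. u = Bar c # w \<and> absq b v c w"
  using alpha_Rb unfolding Rb_def by blast



section \<open>Alpha classes and bar languages\<close>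

lemma alpha_cls_eq_iff: "alpha_cls u = alpha_cls v \<longleftrightarrow> alpha_eq u v"
proof
  assume "alpha_cls u = alpha_cls v"
  then have "v \<in> alpha_cls u" unfolding alpha_cls_def by auto
  then show "alpha_eq u v" unfolding alpha_cls_def by simp
next
  assume uv: "alpha_eq u v"
  have "alpha_eq u w \<longleftrightarrow> alpha_eq v w" for w
    using alpha_trans[OF uv, of w] alpha_trans[OF alpha_sym[OF uv], of w] by blast
  then have "alpha_eq u = alpha_eq v" by (intro ext)
  then show "alpha_cls u = alpha_cls v"
    unfolding alpha_cls_def by simp
qed

lemma alpha_cls_classes [simp]: "alpha_cls w \<in> alpha_classes"
  unfolding alpha_classes_def by simp

lemma classesE: "c \<in> alpha_classes \<Longrightarrow> (\<And>w. c = alpha_cls w \<Longrightarrow> P) \<Longrightarrow> P"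
  unfolding alpha_classes_def by auto

lemma cls_act_cls [simp]: "cls_act p (alpha_cls w) = alpha_cls (bs_act p w)"
proof -
  have "alpha_cls (bs_act p v) = alpha_cls (bs_act p w)" if "v \<in> alpha_cls w" for v
  proof -
    have "alpha_eq w v" using that unfolding alpha_cls_def by simp
    then have "alpha_eq (bs_act p w) (bs_act p v)" by (rule alpha_eq_eqvt)
    then show ?thesis unfolding alpha_cls_eq_iff by (rule alpha_sym)
  qed
  then have eq: "(\<lambda>v. alpha_cls (bs_act p v)) ` alpha_cls w \<subseteq> {alpha_cls (bs_act p w)}" by blast
  have "w \<in> alpha_cls w" unfolding alpha_cls_def by simp
  then have "(\<lambda>v. alpha_cls (bs_act p v)) ` alpha_cls w = {alpha_cls (bs_act p w)}" using eq by blast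
  then show ?thesis unfolding cls_act_def by simp
qed

lemma classes_eqI:
  assumes "A \<subseteq> alpha_classes" "B \<subseteq> alpha_classes" "\<And>w. alpha_cls w \<in> A \<longleftrightarrow> alpha_cls w \<in> B"
  shows "A = B"
proof (intro set_eqI iffI)
  fix c assume "c \<in> A"
  then show "c \<in> B" using assms by (metis classesE subsetD)
next
  fix c assume "c \<in> B"
  then show "c \<in> A" using assms by (metis classesE subsetD)
qed

lemma lang_act_mem:
  assumes S: "S \<subseteq> alpha_classes"
  shows "alpha_cls w \<in> lang_act p S \<longleftrightarrow> alpha_cls (bs_act (inverse p) w) \<in> S"
proof
  assume "alpha_cls w \<in> lang_act p S"
  then obtain c where c: "c \<in> S" "cls_act p c = alpha_cls w" unfolding lang_act_def by auto
  obtain u where u: "c = alpha_cls u" using c(1) S by (metis classesE subsetD)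
  have "alpha_eq (bs_act p u) w" using c(2) u by (simp add: alpha_cls_eq_iff)
  then have "alpha_eq u (bs_act (inverse p) w)" using alpha_eq_eqvt[of "bs_act p u" w "inverse p"] by simp
  then have "alpha_cls u = alpha_cls (bs_act (inverse p) w)" by (simp add: alpha_cls_eq_iff)
  then show "alpha_cls (bs_act (inverse p) w) \<in> S" using c(1) u by simp
next
  assume "alpha_cls (bs_act (inverse p) w) \<in> S"
  moreover have "cls_act p (alpha_cls (bs_act (inverse p) w)) = alpha_cls w" by simp
  ultimately show "alpha_cls w \<in> lang_act p S" unfolding lang_act_def by (metis image_eqI)
qed

lemma lang_act_sub: "S \<subseteq> alpha_classes \<Longrightarrow> lang_act p S \<subseteq> alpha_classes"
  unfolding lang_act_def by (auto elim!: classesE)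

lemma lang_act_comp:
  assumes S: "S \<subseteq> alpha_classes"
  shows "lang_act (p * q) S = lang_act p (lang_act q S)"
  by (rule classes_eqI) (use S lang_act_sub[OF S] in \<open>simp_all add: lang_act_sub lang_act_mem bs_act_comp\<close>)

lemma lang_act_one:
  assumes S: "S \<subseteq> alpha_classes"
  shows "lang_act 1 S = S"
  by (rule classes_eqI) (use S in \<open>simp_all add: lang_act_sub lang_act_mem\<close>)

lemma deriv_nm_mem: "alpha_cls v \<in> deriv_nm S a \<longleftrightarrow> alpha_cls (Nm a # v) \<in> S"
proof
  assume "alpha_cls v \<in> deriv_nm S a"
  then obtain w where "alpha_cls v = alpha_cls w" "alpha_cls (Nm a # w) \<in> S" unfolding deriv_nm_def by auto
  then show "alpha_cls (Nm a # v) \<in> S"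
    by (metis alpha_cls_eq_iff alpha_eq_cons)
qed (auto simp: deriv_nm_def)

lemma deriv_bar_mem: "alpha_cls v \<in> deriv_bar S a \<longleftrightarrow> alpha_cls (Bar a # v) \<in> S"
proof
  assume "alpha_cls v \<in> deriv_bar S a"
  then obtain w where "alpha_cls v = alpha_cls w" "alpha_cls (Bar a # w) \<in> S" unfolding deriv_bar_def by auto
  then show "alpha_cls (Bar a # v) \<in> S"
    by (metis alpha_cls_eq_iff alpha_eq_cons)
qed (auto simp: deriv_bar_def)

lemma deriv_nm_sub: "deriv_nm S a \<subseteq> alpha_classes" unfolding deriv_nm_def by auto
lemma deriv_bar_sub: "deriv_bar S a \<subseteq> alpha_classes" unfolding deriv_bar_def by auto

lemma deriv_nm_eqvt:
  assumes S: "S \<subseteq> alpha_classes"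
  shows "deriv_nm (lang_act p S) (Perm.apply p a) = lang_act p (deriv_nm S a)"
  by (rule classes_eqI) (use S in \<open>simp_all add: deriv_nm_sub lang_act_sub lang_act_mem deriv_nm_mem\<close>)

lemma deriv_bar_eqvt:
  assumes S: "S \<subseteq> alpha_classes"
  shows "deriv_bar (lang_act p S) (Perm.apply p a) = lang_act p (deriv_bar S a)"
  by (rule classes_eqI) (use S in \<open>simp_all add: deriv_bar_sub lang_act_sub lang_act_mem deriv_bar_mem\<close>)

lemma bar_langs_sub: "S \<in> bar_langs \<Longrightarrow> S \<subseteq> alpha_classes"
  unfolding bar_langs_def by auto

lemma bar_langs_fin: "S \<in> bar_langs \<Longrightarrow> fin_supp lang_act S"
  unfolding bar_langs_def by auto

lemma bar_langs_act:
  assumes S: "S \<in> bar_langs" shows "lang_act p S \<in> bar_langs"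
proof -
  obtain A where A: "finite A" "supports lang_act A S" using bar_langs_fin[OF S] unfolding fin_supp_def by auto
  have "supports lang_act (Perm.apply p ` A) (lang_act p S)"
    by (rule supports_act[OF _ A(2)]) (rule lang_act_comp[OF bar_langs_sub[OF S]])
  then show ?thesis unfolding bar_langs_def fin_supp_def mem_Collect_eq
    using A(1) lang_act_sub[OF bar_langs_sub[OF S]] by (intro conjI exI[of _ "Perm.apply p ` A"]) auto
qed

lemma is_action_langs: "is_action lang_act bar_langs"
  unfolding is_action_def by (simp add: bar_langs_act lang_act_one lang_act_comp bar_langs_sub)

lemma nominal_langs: "nominal lang_act bar_langs"
  unfolding nominal_def by (simp add: is_action_langs bar_langs_fin)

lemma deriv_langs:
  assumes S: "S \<in> bar_langs"
  shows "deriv_nm S a \<in> bar_langs" "deriv_bar S a \<in> bar_langs"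
proof -
  obtain A where A: "finite A" "supports lang_act A S" using bar_langs_fin[OF S] unfolding fin_supp_def by auto
  have sp_nm: "supports lang_act (insert a A) (deriv_nm S a)"
    unfolding supports_def
  proof (intro allI impI)
    fix q assume q: "\<forall>b\<in>insert a A. Perm.apply q b = b"
    then have "lang_act q S = S" using A(2) unfolding supports_def by auto
    then show "lang_act q (deriv_nm S a) = deriv_nm S a"
      using deriv_nm_eqvt[OF bar_langs_sub[OF S], of q a] q by simp
  qed
  show "deriv_nm S a \<in> bar_langs"
    unfolding bar_langs_def fin_supp_def mem_Collect_eq
    using A(1) deriv_nm_sub[of S a] sp_nm by (intro conjI exI[of _ "insert a A"]) auto
  have sp_bar: "supports lang_act (insert a A) (deriv_bar S a)"
    unfolding supports_def
  proof (intro allI impI)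
    fix q assume q: "\<forall>b\<in>insert a A. Perm.apply q b = b"
    then have "lang_act q S = S" using A(2) unfolding supports_def by auto
    then show "lang_act q (deriv_bar S a) = deriv_bar S a"
      using deriv_bar_eqvt[OF bar_langs_sub[OF S], of q a] q by simp
  qed
  show "deriv_bar S a \<in> bar_langs"
    unfolding bar_langs_def fin_supp_def mem_Collect_eq
    using A(1) deriv_bar_sub[of S a] sp_bar by (intro conjI exI[of _ "insert a A"]) auto
qed

lemma deriv_nm_fun:
  assumes S: "S \<subseteq> alpha_classes"
  shows "fun_act lang_act p (deriv_nm S) = deriv_nm (lang_act p S)"
proof
  fix a
  have "lang_act p (deriv_nm S (Perm.apply (inverse p) a)) = deriv_nm (lang_act p S) a"
    using deriv_nm_eqvt[OF S, of p "Perm.apply (inverse p) a"] by simp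
  then show "fun_act lang_act p (deriv_nm S) a = deriv_nm (lang_act p S) a"
    unfolding fun_act_def by simp
qed

lemma deriv_nm_exp:
  assumes S: "S \<in> bar_langs" shows "deriv_nm S \<in> exp_carrier lang_act bar_langs"
proof -
  obtain A where A: "finite A" "supports lang_act A S" using bar_langs_fin[OF S] unfolding fin_supp_def by auto
  have "supports (fun_act lang_act) A (deriv_nm S)"
    unfolding supports_def
  proof (intro allI impI)
    fix q assume q: "\<forall>b\<in>A. Perm.apply q b = b"
    then have "lang_act q S = S" using A(2) unfolding supports_def by auto
    then show "fun_act lang_act q (deriv_nm S) = deriv_nm S"
      using deriv_nm_fun[OF bar_langs_sub[OF S], of q] by simp
  qed
  then show ?thesis unfolding exp_carrier_def fin_supp_def mem_Collect_eq
    using A(1) deriv_langs[OF S] by (intro conjI allI exI[of _ A]) auto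
qed

section \<open>The structure tau\<close>

lemma ex_fresh_lang:
  fixes S :: "'a::infinite blang"
  assumes S: "S \<in> bar_langs" shows "\<exists>a. fresh lang_act a S"
  using fresh_avoid[of "{}" lang_act S lang_act S] bar_langs_fin[OF S] by auto

lemma some_fresh:
  fixes S :: "'a::infinite blang"
  assumes S: "S \<in> bar_langs" shows "fresh lang_act (SOME a. fresh lang_act a S) S"
  using someI_ex[OF ex_fresh_lang[OF S]] .

lemma deriv_bar_swap:
  fixes S :: "'a::infinite blang"
  assumes S: "S \<in> bar_langs" and a: "fresh lang_act a S" and c: "fresh lang_act c S"
  shows "lang_act (Perm.swap a c) (deriv_bar S a) = deriv_bar S c"
  using deriv_bar_eqvt[OF bar_langs_sub[OF S], of "Perm.swap a c" a]
    swap_fresh[OF is_action_langs S a c] by simp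

lemma tau_indep:
  fixes S :: "'a::infinite blang"
  assumes S: "S \<in> bar_langs" and a: "fresh lang_act a S" and a': "fresh lang_act a' S"
  shows "abs_cls lang_act bar_langs a (deriv_bar S a) = abs_cls lang_act bar_langs a' (deriv_bar S a')"
proof -
  obtain c where c: "c \<notin> {a, a'}" "fresh lang_act c (deriv_bar S a)" "fresh lang_act c (deriv_bar S a')"
    "fresh lang_act c S"
    using fresh_avoid3[of "{a, a'}" lang_act "deriv_bar S a" lang_act "deriv_bar S a'" lang_act S]
      deriv_langs(2)[OF S] bar_langs_fin S by auto
  have "abs_rel lang_act (a, deriv_bar S a) (a', deriv_bar S a')"
    unfolding abs_rel_simp
    using c deriv_bar_swap[OF S a c(4)] deriv_bar_swap[OF S a' c(4)] by (intro exI[of _ c]) auto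
  then show ?thesis
    by (rule abs_cls_eq[OF nominal_langs deriv_langs(2)[OF S] deriv_langs(2)[OF S]])
qed

lemma tau_third:
  fixes S :: "'a::infinite blang"
  assumes S: "S \<in> bar_langs" and a: "fresh lang_act a S"
  shows "snd (snd (tau S)) = abs_cls lang_act bar_langs a (deriv_bar S a)"
  unfolding tau_def Let_def using tau_indep[OF S some_fresh[OF S] a] by simp

lemma tau_eqvt:
  fixes S :: "'a::infinite blang"
  assumes S: "S \<in> bar_langs"
  shows "tau (lang_act p S) = G_act lang_act p (tau S)"
proof -
  obtain a where a: "fresh lang_act a S" using ex_fresh_lang[OF S] by blast
  have pa: "fresh lang_act (Perm.apply p a) (lang_act p S)"
    by (rule fresh_act[OF is_action_langs S a])
  have pS: "lang_act p S \<in> bar_langs" by (rule bar_langs_act[OF S])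
  have 1: "(alpha_cls [] \<in> lang_act p S) = (alpha_cls [] \<in> S)"
    using lang_act_mem[OF bar_langs_sub[OF S], of "[]" p] by simp
  have 2: "deriv_nm (lang_act p S) = fun_act lang_act p (deriv_nm S)"
    using deriv_nm_fun[OF bar_langs_sub[OF S]] by simp
  have "snd (snd (tau (lang_act p S))) =
      abs_cls lang_act bar_langs (Perm.apply p a) (deriv_bar (lang_act p S) (Perm.apply p a))"
    by (rule tau_third[OF pS pa])
  also have "\<dots> = abs_cls lang_act bar_langs (Perm.apply p a) (lang_act p (deriv_bar S a))"
    using deriv_bar_eqvt[OF bar_langs_sub[OF S]] by simp
  also have "\<dots> = abs_act lang_act p (abs_cls lang_act bar_langs a (deriv_bar S a))"
    using abs_act_cls[OF nominal_langs deriv_langs(2)[OF S]] by simp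
  also have "\<dots> = abs_act lang_act p (snd (snd (tau S)))"
    using tau_third[OF S a] by simp
  finally have 3: "snd (snd (tau (lang_act p S))) = abs_act lang_act p (snd (snd (tau S)))" .
  show ?thesis unfolding G_act_def
    using 1 2 3 by (simp add: tau_def split: prod.split)
qed

lemma tau_carrier:
  fixes S :: "'a::infinite blang"
  assumes S: "S \<in> bar_langs"
  shows "tau S \<in> G_carrier lang_act bar_langs"
proof -
  obtain a where a: "fresh lang_act a S" using ex_fresh_lang[OF S] by blast
  have "snd (snd (tau S)) \<in> abs_carrier lang_act bar_langs"
    unfolding tau_third[OF S a] abs_carrier_def using deriv_langs(2)[OF S] by blast
  then show ?thesis unfolding G_carrier_def using deriv_nm_exp[OF S]
    by (simp add: tau_def Let_def)
qed

lemma G_coalg_tau: "G_coalg (lang_act :: 'a::infinite perm \<Rightarrow> 'a blang \<Rightarrow> 'a blang) bar_langs tau"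
  unfolding G_coalg_def equivariant_def
  using nominal_langs tau_carrier tau_eqvt by blast



section \<open>Finality\<close>

primrec acc :: "('x \<Rightarrow> ('a, 'x) G) \<Rightarrow> 'a barl list \<Rightarrow> 'x \<Rightarrow> bool" where
  "acc c [] x = fst (c x)"
| "acc c (l # v) x = (case l of Nm a \<Rightarrow> acc c v (fst (snd (c x)) a)
     | Bar a \<Rightarrow> (\<exists>y. (a, y) \<in> snd (snd (c x)) \<and> acc c v y))"

definition Pacc :: "('x \<Rightarrow> ('a, 'x) G) \<Rightarrow> 'a barl list \<Rightarrow> 'x \<Rightarrow> bool" where
  "Pacc c w x \<longleftrightarrow> (\<exists>u. alpha_eq w u \<and> acc c u x)"

definition hL :: "('x \<Rightarrow> ('a, 'x) G) \<Rightarrow> 'x \<Rightarrow> 'a blang" where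
  "hL c x = {alpha_cls u | u. acc c u x}"

lemma hL_mem: "alpha_cls w \<in> hL c x \<longleftrightarrow> Pacc c w x"
  unfolding hL_def Pacc_def by (auto simp: alpha_cls_eq_iff)

lemma hL_sub: "hL c x \<subseteq> alpha_classes"
  unfolding hL_def by auto

lemma Pacc_alpha: "alpha_eq w w' \<Longrightarrow> Pacc c w x = Pacc c w' x"
  unfolding Pacc_def by (meson alpha_sym alpha_trans)

lemma Pacc_Nil:
  fixes c :: "'x \<Rightarrow> ('a::infinite, 'x) G"
  shows "Pacc c [] x \<longleftrightarrow> fst (c x)"
proof
  assume "Pacc c [] x"
  then obtain u where "alpha_eq [] u" "acc c u x" unfolding Pacc_def by blast
  then show "fst (c x)" using alpha_Nil by fastforce
next
  assume "fst (c x)"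
  then show "Pacc c [] x" unfolding Pacc_def by (intro exI[of _ "[]"]) simp
qed

lemma Pacc_Nm:
  fixes c :: "'x \<Rightarrow> ('a::infinite, 'x) G"
  shows "Pacc c (Nm a # v) x \<longleftrightarrow> Pacc c v (fst (snd (c x)) a)"
proof
  assume "Pacc c (Nm a # v) x"
  then obtain u where u: "alpha_eq (Nm a # v) u" "acc c u x" unfolding Pacc_def by blast
  obtain w where "u = Nm a # w" "alpha_eq v w" using alpha_Nm[OF u(1)] by blast
  then show "Pacc c v (fst (snd (c x)) a)" using u(2) unfolding Pacc_def by auto
next
  assume "Pacc c v (fst (snd (c x)) a)"
  then obtain u where u: "alpha_eq v u" "acc c u (fst (snd (c x)) a)" unfolding Pacc_def by blast
  then show "Pacc c (Nm a # v) x" unfolding Pacc_def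
    by (intro exI[of _ "Nm a # u"]) (simp add: alpha_eq_cons)
qed

lemma G_act_simp: "G_act act p (b, f, \<alpha>) = (b, fun_act act p f, abs_act act p \<alpha>)"
  unfolding G_act_def by simp

lemma G_map_simp: "G_map actY Y h (b, f, \<alpha>) = (b, h \<circ> f, abs_map actY Y h \<alpha>)"
  unfolding G_map_def by simp

lemma coalg_nominal: "G_coalg act X c \<Longrightarrow> nominal act X"
  unfolding G_coalg_def by simp

lemma coalg_action: "G_coalg act X c \<Longrightarrow> is_action act X"
  unfolding G_coalg_def nominal_def by simp

lemma coalg_carrier: "G_coalg act X c \<Longrightarrow> x \<in> X \<Longrightarrow> c x \<in> G_carrier act X"
  unfolding G_coalg_def equivariant_def by simp

lemma coalg_f: "G_coalg act X c \<Longrightarrow> x \<in> X \<Longrightarrow> fst (snd (c x)) a \<in> X"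
  using coalg_carrier[of act X c x] unfolding G_carrier_def exp_carrier_def by auto

lemma coalg_alpha: "G_coalg act X c \<Longrightarrow> x \<in> X \<Longrightarrow>
    \<exists>a0 x0. x0 \<in> X \<and> snd (snd (c x)) = abs_cls act X a0 x0"
  using coalg_carrier[of act X c x] unfolding G_carrier_def abs_carrier_def mem_Times_iff by blast

lemma coalg_alpha_mem: "G_coalg act X c \<Longrightarrow> x \<in> X \<Longrightarrow> (a, y) \<in> snd (snd (c x)) \<Longrightarrow> y \<in> X"
  using coalg_alpha[of act X c x] abs_cls_memD by metis

lemma coalg_eqvt: "G_coalg act X c \<Longrightarrow> x \<in> X \<Longrightarrow> c (act p x) = G_act act p (c x)"
  unfolding G_coalg_def equivariant_def by simp

lemma coalg_eqvt_parts:
  assumes "G_coalg act X c" "x \<in> X"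
  shows "fst (c (act p x)) = fst (c x)"
    "fst (snd (c (act p x))) = fun_act act p (fst (snd (c x)))"
    "snd (snd (c (act p x))) = abs_act act p (snd (snd (c x)))"
  using coalg_eqvt[OF assms, of p] by (cases "c x"; simp add: G_act_simp)+

lemma acc_eqvt:
  assumes co: "G_coalg act X c"
  shows "x \<in> X \<Longrightarrow> acc c (bs_act p w) (act p x) = acc c w x"
proof (induction w arbitrary: x)
  case Nil
  then show ?case using coalg_eqvt_parts(1)[OF co] by simp
next
  case (Cons l v)
  show ?case
  proof (cases l)
    case (Nm a)
    have "fst (snd (c (act p x))) (Perm.apply p a) = act p (fst (snd (c x)) a)"
      using coalg_eqvt_parts(2)[OF co Cons.prems] unfolding fun_act_def by simp
    then show ?thesis using Nm Cons.IH[OF coalg_f[OF co Cons.prems]] by simp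
  next
    case (Bar a)
    have "(\<exists>y. (Perm.apply p a, y) \<in> abs_act act p (snd (snd (c x))) \<and> acc c (bs_act p v) y)
        \<longleftrightarrow> (\<exists>y. (a, y) \<in> snd (snd (c x)) \<and> acc c v y)"
    proof
      assume "\<exists>y. (Perm.apply p a, y) \<in> abs_act act p (snd (snd (c x))) \<and> acc c (bs_act p v) y"
      then obtain y where y: "(Perm.apply p a, y) \<in> abs_act act p (snd (snd (c x)))" "acc c (bs_act p v) y"
        by blast
      then obtain a' y' where y': "(a', y') \<in> snd (snd (c x))" "Perm.apply p a = Perm.apply p a'" "y = act p y'"
        unfolding abs_act_def by auto
      have "a' = a" using y'(2) by (simp add: apply_inj)
      moreover have "acc c v y'"
        using y(2) y'(3) Cons.IH[OF coalg_alpha_mem[OF co Cons.prems y'(1)]] by simp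
      ultimately show "\<exists>y. (a, y) \<in> snd (snd (c x)) \<and> acc c v y" using y'(1) by blast
    next
      assume "\<exists>y. (a, y) \<in> snd (snd (c x)) \<and> acc c v y"
      then obtain y where y: "(a, y) \<in> snd (snd (c x))" "acc c v y" by blast
      have "(Perm.apply p a, act p y) \<in> abs_act act p (snd (snd (c x)))"
        unfolding abs_act_def using y(1) by force
      moreover have "acc c (bs_act p v) (act p y)"
        using y(2) Cons.IH[OF coalg_alpha_mem[OF co Cons.prems y(1)]] by simp
      ultimately show "\<exists>y. (Perm.apply p a, y) \<in> abs_act act p (snd (snd (c x))) \<and> acc c (bs_act p v) y"
        by blast
    qed
    then show ?thesis using Bar coalg_eqvt_parts(3)[OF co Cons.prems] by simp
  qed
qed

lemma hL_eqvt:
  assumes co: "G_coalg act X c" and x: "x \<in> X"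
  shows "hL c (act p x) = lang_act p (hL c x)"
proof (rule classes_eqI[OF hL_sub lang_act_sub[OF hL_sub]])
  fix w
  have act: "is_action act X" using coalg_action[OF co] .
  have "Pacc c w (act p x) \<longleftrightarrow> Pacc c (bs_act (inverse p) w) x"
  proof
    assume "Pacc c w (act p x)"
    then obtain u where u: "alpha_eq w u" "acc c u (act p x)" unfolding Pacc_def by blast
    have "acc c (bs_act (inverse p) u) x"
      using acc_eqvt[OF co x, of p "bs_act (inverse p) u"] u(2) by simp
    moreover have "alpha_eq (bs_act (inverse p) w) (bs_act (inverse p) u)" by (rule alpha_eq_eqvt[OF u(1)])
    ultimately show "Pacc c (bs_act (inverse p) w) x" unfolding Pacc_def by blast
  next
    assume "Pacc c (bs_act (inverse p) w) x"
    then obtain u where u: "alpha_eq (bs_act (inverse p) w) u" "acc c u x" unfolding Pacc_def by blast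
    have "acc c (bs_act p u) (act p x)" using acc_eqvt[OF co x, of p u] u(2) by simp
    moreover have "alpha_eq w (bs_act p u)" using alpha_eq_eqvt[OF u(1), of p] by simp
    ultimately show "Pacc c w (act p x)" unfolding Pacc_def by blast
  qed
  then show "alpha_cls w \<in> hL c (act p x) \<longleftrightarrow> alpha_cls w \<in> lang_act p (hL c x)"
    by (simp add: hL_mem lang_act_mem[OF hL_sub])
qed

lemma hL_langs:
  assumes co: "G_coalg act X c" and x: "x \<in> X"
  shows "hL c x \<in> bar_langs"
proof -
  obtain A where A: "finite A" "supports act A x"
    using nominal_fin_supp[OF coalg_nominal[OF co] x] unfolding fin_supp_def by blast
  have "supports lang_act A (hL c x)"
    unfolding supports_def
  proof (intro allI impI)
    fix q assume "\<forall>a\<in>A. Perm.apply q a = a"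
    then have "act q x = x" using A(2) unfolding supports_def by blast
    then show "lang_act q (hL c x) = hL c x" using hL_eqvt[OF co x, of q] by simp
  qed
  then show ?thesis unfolding bar_langs_def fin_supp_def mem_Collect_eq
    using A(1) hL_sub[of c x] by (intro conjI exI[of _ A]) auto
qed

lemma hL_equivariant:
  assumes co: "G_coalg act X c"
  shows "equivariant act X lang_act bar_langs (hL c)"
  unfolding equivariant_def using hL_langs[OF co] hL_eqvt[OF co] by blast

lemma L_bar:
  fixes act :: "'a::infinite perm \<Rightarrow> 'x \<Rightarrow> 'x"
  assumes co: "G_coalg act X c" and x: "x \<in> X" and cx: "snd (snd (c x)) = abs_cls act X a0 x0"
    and x0: "x0 \<in> X" and d: "d \<noteq> a0" "fresh act d x0"
  shows "Pacc c (Bar d # w) x \<longleftrightarrow> Pacc c w (act (Perm.swap a0 d) x0)"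
proof
  have nom: "nominal act X" using coalg_nominal[OF co] .
  have act: "is_action act X" using coalg_action[OF co] .
  assume "Pacc c (Bar d # w) x"
  then obtain u' where u': "alpha_eq (Bar d # w) u'" "acc c u' x" unfolding Pacc_def by blast
  obtain b v where bv: "u' = Bar b # v" "absq d w b v" using alpha_Bar[OF u'(1)] by blast
  obtain y where y: "(b, y) \<in> snd (snd (c x))" "acc c v y" using u'(2) bv(1) by auto
  have yX: "y \<in> X" and r: "abs_rel act (a0, x0) (b, y)" using abs_cls_memD[of b y act X a0 x0] y(1) cx by auto
  obtain e where e: "e \<notin> bs_names w \<union> bs_names v \<union> {d, b, a0}" "fresh act e x0" "fresh act e y"
    using fresh_avoid[of "bs_names w \<union> bs_names v \<union> {d, b, a0}" act x0 act y]
      nominal_fin_supp[OF nom] x0 yX by auto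
  have al: "alpha_eq (bs_act (Perm.swap d e) w) (bs_act (Perm.swap b e) v)"
    using bv(2) e(1) unfolding absq_def by auto
  have any: "act (Perm.swap a0 e) x0 = act (Perm.swap b e) y"
    using abs_rel_any[OF nom x0 yX r] e by auto
  define u where "u = bs_act (Perm.swap d e) (bs_act (Perm.swap b e) v)"
  have "alpha_eq w u"
    using alpha_eq_eqvt[OF al, of "Perm.swap d e"] unfolding u_def by (simp add: bs_act_comp[symmetric])
  moreover have "act (Perm.swap d e) (act (Perm.swap b e) y) = act (Perm.swap a0 d) x0"
  proof -
    have "act (Perm.swap d e) (act (Perm.swap b e) y) = act (Perm.swap e d * Perm.swap a0 e) x0"
      using any act_comp[OF act x0] swap_sym[of d e] by simp
    also have "\<dots> = act (Perm.swap a0 d * Perm.swap e d) x0"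
      using swap_comm3[of e a0 d] e d by auto
    also have "\<dots> = act (Perm.swap a0 d) x0"
      using act_comp[OF act x0] swap_fresh[OF act x0 e(2) d(2)] by simp
    finally show ?thesis .
  qed
  moreover have "acc c u (act (Perm.swap d e) (act (Perm.swap b e) y))"
    unfolding u_def using acc_eqvt[OF co act_closed[OF act yX]] acc_eqvt[OF co yX] y(2) by simp
  ultimately show "Pacc c w (act (Perm.swap a0 d) x0)" unfolding Pacc_def by auto
next
  have nom: "nominal act X" using coalg_nominal[OF co] .
  assume "Pacc c w (act (Perm.swap a0 d) x0)"
  then obtain u where u: "alpha_eq w u" "acc c u (act (Perm.swap a0 d) x0)" unfolding Pacc_def by blast
  have "(d, act (Perm.swap a0 d) x0) \<in> snd (snd (c x))"
    using abs_cls_swap_mem[OF nom x0 d] cx by simp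
  then have "acc c (Bar d # u) x" using u(2) by auto
  then show "Pacc c (Bar d # w) x" unfolding Pacc_def using alpha_eq_cons[OF u(1)] by blast
qed



lemma hL_hom:
  fixes act :: "'a::infinite perm \<Rightarrow> 'x \<Rightarrow> 'x"
  assumes co: "G_coalg act X c"
  shows "G_hom act X c lang_act bar_langs tau (hL c)"
  unfolding G_hom_def
proof (intro conjI ballI)
  show "equivariant act X lang_act bar_langs (hL c)" by (rule hL_equivariant[OF co])
  fix x assume x: "x \<in> X"
  have nom: "nominal act X" using coalg_nominal[OF co] .
  have act: "is_action act X" using coalg_action[OF co] .
  have hx: "hL c x \<in> bar_langs" by (rule hL_langs[OF co x])
  obtain b f \<alpha> where cx: "c x = (b, f, \<alpha>)" by (cases "c x") auto
  obtain a0 x0 where x0: "x0 \<in> X" and al: "\<alpha> = abs_cls act X a0 x0"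
    using coalg_alpha[OF co x] cx by auto
  have hx0: "hL c x0 \<in> bar_langs" by (rule hL_langs[OF co x0])
  have 1: "(alpha_cls [] \<in> hL c x) = b"
    using Pacc_Nil[of c x] cx by (simp add: hL_mem)
  have 2: "deriv_nm (hL c x) = hL c \<circ> f"
  proof
    fix a
    show "deriv_nm (hL c x) a = (hL c \<circ> f) a"
      unfolding comp_apply by (rule classes_eqI[OF deriv_nm_sub hL_sub])
        (use cx in \<open>simp add: deriv_nm_mem hL_mem Pacc_Nm\<close>)
  qed
  define as where "as = (SOME a. fresh lang_act a (hL c x))"
  have as: "fresh lang_act as (hL c x)" unfolding as_def by (rule some_fresh[OF hx])
  define D where "D = deriv_bar (hL c x) as"
  have D: "D \<in> bar_langs" unfolding D_def by (rule deriv_langs(2)[OF hx])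
  have t3: "snd (snd (tau (hL c x))) = abs_cls lang_act bar_langs as D"
    unfolding D_def by (rule tau_third[OF hx as])
  obtain e where e: "e \<notin> {as, a0}" "fresh lang_act e D" "fresh act e x0" "fresh lang_act e (hL c x)"
    using fresh_avoid3[of "{as, a0}" lang_act D act x0 lang_act "hL c x"]
      bar_langs_fin[OF D] bar_langs_fin[OF hx] nominal_fin_supp[OF nom x0] by auto
  have e2: "fresh lang_act e (hL c x0)" by (rule fresh_equiv[OF hL_equivariant[OF co] x0 e(3)])
  have "lang_act (Perm.swap as e) D = deriv_bar (hL c x) e"
    unfolding D_def by (rule deriv_bar_swap[OF hx as e(4)])
  also have "\<dots> = hL c (act (Perm.swap a0 e) x0)"
    by (rule classes_eqI[OF deriv_bar_sub hL_sub])
      (use L_bar[OF co x _ x0, of a0 e] cx al e in \<open>simp add: deriv_bar_mem hL_mem\<close>)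
  also have "\<dots> = lang_act (Perm.swap a0 e) (hL c x0)" by (rule hL_eqvt[OF co x0])
  finally have "abs_rel lang_act (as, D) (a0, hL c x0)"
    unfolding abs_rel_simp using e e2 by (intro exI[of _ e]) auto
  then have "abs_cls lang_act bar_langs as D = abs_cls lang_act bar_langs a0 (hL c x0)"
    by (rule abs_cls_eq[OF nominal_langs D hx0])
  also have "\<dots> = abs_map lang_act bar_langs (hL c) \<alpha>"
    unfolding al by (rule abs_map_cls[OF nom nominal_langs hL_equivariant[OF co] x0, symmetric])
  finally have 3: "snd (snd (tau (hL c x))) = abs_map lang_act bar_langs (hL c) \<alpha>" using t3 by simp
  show "tau (hL c x) = G_map lang_act bar_langs (hL c) (c x)"
    unfolding cx G_map_simp using 1 2 3 by (simp add: tau_def)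
qed

lemma hom_unique:
  fixes act :: "'a::infinite perm \<Rightarrow> 'x \<Rightarrow> 'x"
  assumes co: "G_coalg act X c" and h: "G_hom act X c lang_act bar_langs tau h"
  shows "\<forall>x\<in>X. h x = hL c x"
proof -
  have nom: "nominal act X" using coalg_nominal[OF co] .
  have act: "is_action act X" using coalg_action[OF co] .
  have heq: "equivariant act X lang_act bar_langs h" using h unfolding G_hom_def by simp
  have hL': "\<And>x. x \<in> X \<Longrightarrow> h x \<in> bar_langs" using heq unfolding equivariant_def by simp
  have heqv: "\<And>x p. x \<in> X \<Longrightarrow> h (act p x) = lang_act p (h x)" using heq unfolding equivariant_def by simp
  have htau: "\<And>x. x \<in> X \<Longrightarrow> tau (h x) = G_map lang_act bar_langs h (c x)" using h unfolding G_hom_def by simp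
  have main: "\<forall>w x. length w = n \<longrightarrow> x \<in> X \<longrightarrow> (alpha_cls w \<in> h x \<longleftrightarrow> Pacc c w x)" for n
  proof (induction n rule: less_induct)
    case (less n)
    show ?case
    proof (intro allI impI)
      fix w :: "'a barl list" and x assume len: "length w = n" and x: "x \<in> X"
      obtain b f \<alpha> where cx: "c x = (b, f, \<alpha>)" by (cases "c x") auto
      have t: "tau (h x) = (b, h \<circ> f, abs_map lang_act bar_langs h \<alpha>)"
        using htau[OF x] cx by (simp add: G_map_simp)
      show "alpha_cls w \<in> h x \<longleftrightarrow> Pacc c w x"
      proof (cases w)
        case Nil
        then show ?thesis using t cx Pacc_Nil[of c x] by (simp add: tau_def)
      next
        case (Cons l v)
        have IH: "alpha_cls v' \<in> h y \<longleftrightarrow> Pacc c v' y" if "length v' = length v" "y \<in> X" for v' y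
        proof -
          have "length v < n" using len Cons by simp
          then have "\<forall>w x. length w = length v \<longrightarrow> x \<in> X \<longrightarrow> (alpha_cls w \<in> h x \<longleftrightarrow> Pacc c w x)"
            by (rule less.IH)
          then show "alpha_cls v' \<in> h y \<longleftrightarrow> Pacc c v' y" using that by blast
        qed
        show ?thesis
        proof (cases l)
          case (Nm a)
          have "deriv_nm (h x) = h \<circ> f" using t by (simp add: tau_def)
          then have "deriv_nm (h x) a = h (f a)" by simp
          then have "alpha_cls (Nm a # v) \<in> h x \<longleftrightarrow> alpha_cls v \<in> h (f a)"
            using deriv_nm_mem[of v "h x" a] by simp
          also have "\<dots> \<longleftrightarrow> Pacc c v (f a)"
            using IH[of v "f a"] coalg_f[OF co x, of a] cx by simp
          also have "\<dots> \<longleftrightarrow> Pacc c (Nm a # v) x" using Pacc_Nm[of c a v x] cx by simp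
          finally show ?thesis using Cons Nm by simp
        next
          case (Bar a)
          obtain a0 x0 where x0: "x0 \<in> X" and al: "\<alpha> = abs_cls act X a0 x0"
            using coalg_alpha[OF co x] cx by auto
          have hx: "h x \<in> bar_langs" by (rule hL'[OF x])
          have hx0: "h x0 \<in> bar_langs" by (rule hL'[OF x0])
          define as where "as = (SOME a. fresh lang_act a (h x))"
          have as: "fresh lang_act as (h x)" unfolding as_def by (rule some_fresh[OF hx])
          define D where "D = deriv_bar (h x) as"
          have D: "D \<in> bar_langs" unfolding D_def by (rule deriv_langs(2)[OF hx])
          have "abs_cls lang_act bar_langs as D = snd (snd (tau (h x)))"
            unfolding D_def by (rule tau_third[OF hx as, symmetric])
          also have "\<dots> = abs_map lang_act bar_langs h \<alpha>" using t by simp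
          also have "\<dots> = abs_cls lang_act bar_langs a0 (h x0)"
            unfolding al by (rule abs_map_cls[OF nom nominal_langs heq x0])
          finally have eqc: "abs_cls lang_act bar_langs as D = abs_cls lang_act bar_langs a0 (h x0)" .
          have "(a0, h x0) \<in> abs_cls lang_act bar_langs as D"
            unfolding eqc by (rule abs_cls_mem[OF nominal_langs hx0])
          then have r: "abs_rel lang_act (as, D) (a0, h x0)" by (rule abs_cls_memD[THEN conjunct2])
          obtain d where d: "d \<notin> bs_names v \<union> {a, as, a0}" "fresh lang_act d D" "fresh act d x0"
            "fresh lang_act d (h x)"
            using fresh_avoid3[of "bs_names v \<union> {a, as, a0}" lang_act D act x0 lang_act "h x"]
              bar_langs_fin[OF D] bar_langs_fin[OF hx] nominal_fin_supp[OF nom x0] by auto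
          have d2: "fresh lang_act d (h x0)" by (rule fresh_equiv[OF heq x0 d(3)])
          have "deriv_bar (h x) d = lang_act (Perm.swap as d) D"
            unfolding D_def by (rule deriv_bar_swap[OF hx as d(4), symmetric])
          also have "\<dots> = lang_act (Perm.swap a0 d) (h x0)"
            by (rule abs_rel_any[OF nominal_langs D hx0 r]) (use d d2 in auto)
          also have "\<dots> = h (act (Perm.swap a0 d) x0)" by (rule heqv[OF x0, symmetric])
          finally have dd: "deriv_bar (h x) d = h (act (Perm.swap a0 d) x0)" .
          define v' where "v' = bs_act (Perm.swap a d) v"
          have ren: "alpha_eq (Bar a # v) (Bar d # v')"
            unfolding v'_def by (rule alpha_rename) (use d in auto)
          have "alpha_cls (Bar a # v) \<in> h x \<longleftrightarrow> alpha_cls (Bar d # v') \<in> h x"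
            using ren by (simp add: alpha_cls_eq_iff[symmetric])
          also have "\<dots> \<longleftrightarrow> alpha_cls v' \<in> h (act (Perm.swap a0 d) x0)"
            using dd deriv_bar_mem[of v' "h x" d] by simp
          also have "\<dots> \<longleftrightarrow> Pacc c v' (act (Perm.swap a0 d) x0)"
            using IH[of v' "act (Perm.swap a0 d) x0"] act_closed[OF act x0] unfolding v'_def by simp
          also have "\<dots> \<longleftrightarrow> Pacc c (Bar d # v') x"
            using L_bar[OF co x _ x0, of a0 d v'] cx al d by simp
          also have "\<dots> \<longleftrightarrow> Pacc c (Bar a # v) x"
            using Pacc_alpha[OF ren, of c x] by (rule sym)
          finally show ?thesis using Cons Bar by simp
        qed
      qed
    qed
  qed
  show ?thesis
  proof
    fix x assume x: "x \<in> X"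
    have m: "alpha_cls w \<in> h x \<longleftrightarrow> alpha_cls w \<in> hL c x" for w
      using main[of "length w"] x unfolding hL_mem by blast
    show "h x = hL c x"
      by (rule classes_eqI[OF bar_langs_sub[OF hL'[OF x]] hL_sub m])
  qed
qed

theorem proposition4p18:
  fixes dummy_name :: "'a::{countable,infinite}"
  shows "G_coalg (lang_act :: 'a perm \<Rightarrow> 'a blang \<Rightarrow> 'a blang) bar_langs tau
    \<and> (\<forall>S\<in>(bar_langs :: 'a blang set). \<forall>a. fresh lang_act a S \<longrightarrow>
          snd (snd (tau S)) = abs_cls lang_act bar_langs a (deriv_bar S a))
    \<and> (\<forall>(act :: 'a perm \<Rightarrow> 'x \<Rightarrow> 'x) X c. G_coalg act X c \<longrightarrow>
          (\<exists>h. G_hom act X c lang_act bar_langs tau h \<and>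
               (\<forall>h'. G_hom act X c lang_act bar_langs tau h' \<longrightarrow> (\<forall>x\<in>X. h' x = h x))))"
proof (intro conjI ballI allI impI)
  show "G_coalg (lang_act :: 'a perm \<Rightarrow> 'a blang \<Rightarrow> 'a blang) bar_langs tau" by (rule G_coalg_tau)
next
  fix S :: "'a blang" and a assume "S \<in> bar_langs" "fresh lang_act a S"
  then show "snd (snd (tau S)) = abs_cls lang_act bar_langs a (deriv_bar S a)" by (rule tau_third)
next
  fix act :: "'a perm \<Rightarrow> 'x \<Rightarrow> 'x" and X c assume co: "G_coalg act X c"
  show "\<exists>h. G_hom act X c lang_act bar_langs tau h \<and>
               (\<forall>h'. G_hom act X c lang_act bar_langs tau h' \<longrightarrow> (\<forall>x\<in>X. h' x = h x))"
    using hL_hom[OF co] hom_unique[OF co] by blast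
qed

end
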